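(* Consider Setting A and suppose $\{\mathcal G[k]\}_{k\ge0}$ satisfies conditions (C1), (C2), (C3). Then there exist observer gains $L_1,\dots,L_N$ and a time $K\in\mathbb N$ such that, when all nodes run Algorithm 1, for every initial state $x[0]$ and all initial estimates, $\hat x_i[k]=x[k]$ for all $k\ge K$ and all $i\in\mathcal V$ (where $\hat x_i[k]=T\hat z_i[k]$).
   Context: Setting A. Consider the discrete-time LTI system $x[k+1]=Ax[k]$, $k\in\mathbb N$, with $A\in\mathbb R^{n\times n}$, monitored by $N$ nodes $\mathcal V=\{1,\dots,N\}$; node $i$ measures $y_i[k]=C_ix[k]$ with $C_i\in\mathbb R^{r_i\times n}$. Let $C=[C_1^T\ \cdots\ C_N^T]^T$ and assume $(A,C)$ is observable. Fix an invertible $T$ such that $\bar A=T^{-1}AT$ is block lower-triangular with diagonal blocks $A_{11},\dots,A_{NN}$ and off-diagonal blocks $A_{jq}$ ($q<j$), zero blocks above the diagonal, and $C_iT=[C_{i1}\ \cdots\ C_{ii}\ 0\ \cdots\ 0]$ for each $i$, with $(A_{jj},C_{jj})$ observable for every $j$ (such $T$ exists). With $z[k]=T^{-1}x[k]$ partitioned compatibly into sub-states $z^{(1)}[k],\dots,z^{(N)}[k]$, one has $z^{(j)}[k+1]=A_{jj}z^{(j)}[k]+\sum_{q=1}^{j-1}A_{jq}z^{(q)}[k]$ and $y_j[k]=\sum_{q=1}^{j}C_{jq}z^{(q)}[k]$. Node $j$ is called the source node of sub-state $j$. Communication: at each time $k$ there is a directed graph $\mathcal G[k]=(\mathcal V,\mathcal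 E[k])$; $(l,i)\in\mathcal E[k]$ means $l$ can send to $i$ at time $k$; $\mathcal N_i[k]=\{l\neq i:(l,i)\in\mathcal E[k]\}$. The union graph over $[k_1,k_2]$ has vertex set $\mathcal V$ and edge set $\bigcup_{\tau=k_1}^{k_2}\mathcal E[\tau]$. Algorithm 1 (run for every sub-state $j$ simultaneously). Each node $i$ keeps an estimate $\hat z^{(j)}_i[k]$ (arbitrary initial value) and a freshness index $\tau^{(j)}_i[k]\in\mathbb N\cup\{\omega\}$, where $\omega$ is a special symbol; initially $\tau^{(j)}_j[0]=0$ and $\tau^{(j)}_i[0]=\omega$ for $i\ne j$. Source node $j$: $\tau^{(j)}_j[k]=0$ for all $k$, and $\hat z^{(j)}_j[k+1]=(A_{jj}-L_jC_{jj})\hat z^{(j)}_j[k]+\sum_{q=1}^{j-1}(A_{jq}-L_jC_{jq})\hat z^{(q)}_j[k]+L_jy_j[k]$, where $L_j$ is an observer gain. Non-source node $i\neq j$ at time $k$: let $\mathcal M^{(j)}_i[k]=\{l\in\mathcal N_i[k]:\tau^{(j)}_l[k]\neq\omega\}$; if $\tau^{(j)}_i[k]=\omega$ let $\mathcal F^{(j)}_i[k]=\mathcal M^{(j)}_i[k]$, otherwise $\mathcal F^{(j)}_i[k]=\{l\in\mathcal M^{(j)}_i[k]:\tau^{(j)}_l[k]<\tau^{(j)}_i[k]\}$. If $\mathcal F^{(j)}_i[k]\ne\emptyset$, pick $u\in\arg\min_{l\in\mathcal F^{(j)}_i[k]}\tau^{(j)}_l[k]$ and set $\tau^{(j)}_i[k+1]=\tau^{(j)}_u[k]+1$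 and $\hat z^{(j)}_i[k+1]=A_{jj}\hat z^{(j)}_u[k]+\sum_{q=1}^{j-1}A_{jq}\hat z^{(q)}_i[k]$ ("$i$ adopts the information of $u$ at time $k$"). If $\mathcal F^{(j)}_i[k]=\emptyset$, set $\tau^{(j)}_i[k+1]=\omega$ if $\tau^{(j)}_i[k]=\omega$ and $\tau^{(j)}_i[k+1]=\tau^{(j)}_i[k]+1$ otherwise, and $\hat z^{(j)}_i[k+1]=A_{jj}\hat z^{(j)}_i[k]+\sum_{q=1}^{j-1}A_{jq}\hat z^{(q)}_i[k]$ ("$i$ adopts its own information"). Conditions on the graph sequence: there is an increasing sequence $\mathbb I=\{t_0,t_1,\dots\}\subset\mathbb N$ with $t_0=0$ such that, with $f(t_q)=t_{q+1}-t_q$: (C1) $f(t_q)$ is non-decreasing in $q$; (C2) with $m(k)=\max\{t_q\in\mathbb I:t_q\le k\}$ and $g(k)=f(m(k))$, one has $\limsup_{k\to\infty}\frac{2(N-1)g(k)}{k}=\delta<1$; (C3) for each $q$, the union graph over $[t_q,t_{q+1}-1]$ is strongly connected. *)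

theory Defs
  imports Complex_Main "Jordan_Normal_Form.Matrix" "HOL-Library.Extended_Real" "HOL-Library.Liminf_Limsup"
begin

(* Conventions: nodes and sub-states are indexed 0..N-1 (paper: 1..N).
   Sub-state j has dimension d j; it occupies coordinates off d j ..< off d j + d j of z. *)

definition off :: "(nat \<Rightarrow> nat) \<Rightarrow> nat \<Rightarrow> nat" where
  "off d j = (\<Sum>q<j. d q)"

definition subm :: "real mat \<Rightarrow> nat \<Rightarrow> nat \<Rightarrow> nat \<Rightarrow> nat \<Rightarrow> real mat" where
  "subm M r0 rs c0 cs = mat rs cs (\<lambda>(a,b). M $$ (r0 + a, c0 + b))"

definition blk :: "(nat \<Rightarrow> nat) \<Rightarrow> real mat \<Rightarrow> nat \<Rightarrow> nat \<Rightarrow> real mat" where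
  "blk d M j q = subm M (off d j) (d j) (off d q) (d q)"

(* column block q of a matrix with n columns (e.g. C_i T), giving C_{iq} *)
definition cblk :: "(nat \<Rightarrow> nat) \<Rightarrow> real mat \<Rightarrow> nat \<Rightarrow> real mat" where
  "cblk d M q = subm M 0 (dim_row M) (off d q) (d q)"

definition vblk :: "(nat \<Rightarrow> nat) \<Rightarrow> real vec \<Rightarrow> nat \<Rightarrow> real vec" where
  "vblk d z j = vec (d j) (\<lambda>a. z $ (off d j + a))"

definition stack :: "(nat \<Rightarrow> nat) \<Rightarrow> nat \<Rightarrow> (nat \<Rightarrow> real vec) \<Rightarrow> real vec" where
  "stack d N zs = vec (off d N)
     (\<lambda>c. let j = (LEAST j. c < off d (Suc j)) in zs j $ (c - off d j))"

primrec vsum :: "nat \<Rightarrow> (nat \<Rightarrow> real vec) \<Rightarrow> nat \<Rightarrow> real vec" where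
  "vsum m f 0 = 0\<^sub>v m"
| "vsum m f (Suc q) = vsum m f q + f q"

definition observable :: "real mat \<Rightarrow> real mat \<Rightarrow> bool" where
  "observable M Cm \<longleftrightarrow>
     (\<forall>v \<in> carrier_vec (dim_col M).
        (\<forall>k < dim_col M. Cm *\<^sub>v ((M ^\<^sub>m k) *\<^sub>v v) = 0\<^sub>v (dim_row Cm)) \<longrightarrow> v = 0\<^sub>v (dim_col M))"

definition observable_stacked :: "nat \<Rightarrow> real mat \<Rightarrow> (nat \<Rightarrow> real mat) \<Rightarrow> bool" where
  "observable_stacked N A C \<longleftrightarrow>
     (\<forall>v \<in> carrier_vec (dim_col A).
        (\<forall>i < N. \<forall>k < dim_col A. C i *\<^sub>v ((A ^\<^sub>m k) *\<^sub>v v) = 0\<^sub>v (dim_row (C i))) \<longrightarrow> v = 0\<^sub>v (dim_col A))"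

(* in-neighbours of node i at time k (E k is the edge set; (l,i) means l can send to i) *)
definition nbrs :: "nat \<Rightarrow> (nat \<Rightarrow> (nat \<times> nat) set) \<Rightarrow> nat \<Rightarrow> nat \<Rightarrow> nat set" where
  "nbrs N E k i = {l. l < N \<and> l \<noteq> i \<and> (l, i) \<in> E k}"

definition union_strongly_connected ::
    "nat \<Rightarrow> (nat \<Rightarrow> (nat \<times> nat) set) \<Rightarrow> nat \<Rightarrow> nat \<Rightarrow> bool" where
  "union_strongly_connected N E k1 k2 \<longleftrightarrow>
     (\<forall>a < N. \<forall>b < N.
        (a, b) \<in> ((\<Union>\<tau> \<in> {k1..k2}. E \<tau>) \<inter> ({..<N} \<times> {..<N}))\<^sup>*)"

(* f(t_q) = t_{q+1} - t_q, indexed by q *)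
definition fgap :: "(nat \<Rightarrow> nat) \<Rightarrow> nat \<Rightarrow> nat" where
  "fgap t q = t (Suc q) - t q"

(* g(k) = f(m(k)), m(k) = max {t_q \<in> I. t_q \<le> k} *)
definition gfun :: "(nat \<Rightarrow> nat) \<Rightarrow> nat \<Rightarrow> nat" where
  "gfun t k = fgap t (GREATEST q. t q \<le> k)"

definition graph_conditions :: "nat \<Rightarrow> (nat \<Rightarrow> (nat \<times> nat) set) \<Rightarrow> (nat \<Rightarrow> nat) \<Rightarrow> bool" where
  "graph_conditions N E t \<longleftrightarrow>
     strict_mono t \<and> t 0 = 0 \<and>
     mono (fgap t) \<and>
     limsup (\<lambda>k. ereal (2 * (real N - 1) * real (gfun t k) / real k)) < 1 \<and>
     (\<forall>q. union_strongly_connected N E (t q) (t (Suc q) - 1))"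

(* A run of Algorithm 1 (all sub-states j simultaneously).
   zh k i j = \<hat>z^{(j)}_i[k], tau k i j = \<tau>^{(j)}_i[k] with None = \<omega>.
   Ab = T^{-1} A T, Cb i = C_i T, L j observer gains, y j k = y_j[k].
   Tie-breaking in the argmin is arbitrary (any admissible u). *)
definition algorithm_run ::
  "nat \<Rightarrow> (nat \<Rightarrow> nat) \<Rightarrow> real mat \<Rightarrow> (nat \<Rightarrow> real mat) \<Rightarrow> (nat \<Rightarrow> real mat) \<Rightarrow>
   (nat \<Rightarrow> (nat \<times> nat) set) \<Rightarrow> (nat \<Rightarrow> nat \<Rightarrow> real vec) \<Rightarrow>
   (nat \<Rightarrow> nat \<Rightarrow> nat \<Rightarrow> real vec) \<Rightarrow> (nat \<Rightarrow> nat \<Rightarrow> nat \<Rightarrow> nat option) \<Rightarrow> bool" where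
  "algorithm_run N d Ab Cb L E y zh tau \<longleftrightarrow>
    (\<forall>i < N. \<forall>j < N. zh 0 i j \<in> carrier_vec (d j)) \<and>
    (\<forall>i < N. \<forall>j < N. tau 0 i j = (if i = j then Some 0 else None)) \<and>
    (\<forall>k. \<forall>j < N.
       tau k j j = Some 0 \<and>
       zh (Suc k) j j =
         (blk d Ab j j - L j * cblk d (Cb j) j) *\<^sub>v zh k j j
         + vsum (d j) (\<lambda>q. (blk d Ab j q - L j * cblk d (Cb j) q) *\<^sub>v zh k j q) j
         + L j *\<^sub>v y j k) \<and>
    (\<forall>k. \<forall>j < N. \<forall>i < N. i \<noteq> j \<longrightarrow>
       (let M = {l \<in> nbrs N E k i. tau k l j \<noteq> None};
            F = (case tau k i j of None \<Rightarrow> M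
                 | Some ti \<Rightarrow> {l \<in> M. the (tau k l j) < ti});
            own = vsum (d j) (\<lambda>q. blk d Ab j q *\<^sub>v zh k i q) j
        in if F \<noteq> {} then
             (\<exists>u \<in> F. (\<forall>l \<in> F. the (tau k u j) \<le> the (tau k l j)) \<and>
                tau (Suc k) i j = Some (the (tau k u j) + 1) \<and>
                zh (Suc k) i j = blk d Ab j j *\<^sub>v zh k u j + own)
           else
             tau (Suc k) i j = map_option Suc (tau k i j) \<and>
             zh (Suc k) i j = blk d Ab j j *\<^sub>v zh k i j + own))"

end

theory Submission
  imports Defs "Jordan_Normal_Form.VS_Connect"
begin


context vec_space
begin

lemma greedy_chain:
  fixes R :: "'a vec \<Rightarrow> 'a vec set \<Rightarrow> bool" and Q :: "nat \<Rightarrow> 'a vec set"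
  assumes Rmono: "\<And>x T T'. R x T \<Longrightarrow> T \<subseteq> T' \<Longrightarrow> R x T'"
    and Q0: "Q 0 \<subseteq> {0\<^sub>v n}"
    and Qc: "\<And>k. Q k \<subseteq> carrier_vec n"
    and Qn: "carrier_vec n \<subseteq> Q n"
    and Qs: "\<And>k x. x \<in> Q (Suc k) \<Longrightarrow> R x (Q k)"
    and kn: "k \<le> n"
  shows "\<exists>bs. length bs = k \<and> distinct bs \<and> set bs \<subseteq> carrier_vec n \<and> lin_indpt (set bs) \<and>
             (\<forall>i<k. R (bs ! i) (span (set (take i bs))))"
  using kn
proof (induction k)
  case 0
  then show ?case by (intro exI[of _ "[]"]) (auto simp: lin_dep_def)
next
  case (Suc k)
  then obtain bs where bs: "length bs = k" "distinct bs" "set bs \<subseteq> carrier_vec n"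
     "lin_indpt (set bs)" "\<forall>i<k. R (bs ! i) (span (set (take i bs)))" by auto
  show ?case
  proof (cases "\<exists>x \<in> carrier_vec n. x \<notin> span (set bs) \<and> R x (span (set bs))")
    case True
    then obtain x where x: "x \<in> carrier_vec n" "x \<notin> span (set bs)" "R x (span (set bs))" by auto
    have xnot: "x \<notin> set bs" using x(2) in_own_span[OF bs(3)] by auto
    have li: "lin_indpt (set bs \<union> {x})"
      using lin_dep_iff_in_span[OF _ bs(4) _ xnot] bs(3) x by auto
    show ?thesis
    proof (intro exI[of _ "bs @ [x]"] conjI allI impI)
      show "length (bs @ [x]) = Suc k" using bs by simp
      show "distinct (bs @ [x])" using bs xnot by simp
      show "set (bs @ [x]) \<subseteq> carrier_vec n" using bs x by simp
      show "lin_indpt (set (bs @ [x]))" using li by simp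
      fix i assume i: "i < Suc k"
      show "R ((bs @ [x]) ! i) (span (set (take i (bs @ [x]))))"
      proof (cases "i < k")
        case True
        then show ?thesis using bs(5) bs(1) by (simp add: nth_append)
      next
        case False
        then have "i = k" using i by simp
        then show ?thesis using x bs(1) by (simp add: nth_append)
      qed
    qed
  next
    case False
    have "Q j \<subseteq> span (set bs)" for j
    proof (induction j)
      case 0
      then show ?case using Q0 span_zero by auto
    next
      case (Suc j)
      show ?case
      proof
        fix x assume x: "x \<in> Q (Suc j)"
        have "R x (span (set bs))" using Rmono[OF Qs[OF x] Suc] .
        then show "x \<in> span (set bs)" using False Qc x by blast
      qed
    qed
    then have "carrier_vec n \<subseteq> span (set bs)" using Qn by blast
    then have sp: "span (set bs) = carrier_vec n" using span_is_subset2[OF bs(3)] by auto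
    have "dim \<le> card (set bs)" by (rule gen_ge_dim) (use bs sp in auto)
    then have "n \<le> k" using dim_is_n distinct_card[OF bs(2)] bs(1) by simp
    then show ?thesis using Suc by simp
  qed
qed

end


primrec msum :: "nat \<Rightarrow> nat \<Rightarrow> (nat \<Rightarrow> real mat) \<Rightarrow> nat \<Rightarrow> real mat" where
  "msum nr nc f 0 = 0\<^sub>m nr nc"
| "msum nr nc f (Suc k) = msum nr nc f k + f k"

lemma msum_carrier: "(\<And>i. i < k \<Longrightarrow> f i \<in> carrier_mat nr nc) \<Longrightarrow> msum nr nc f k \<in> carrier_mat nr nc"
  by (induction k) auto

lemma vsum_carrier: "(\<And>i. i < k \<Longrightarrow> f i \<in> carrier_vec m) \<Longrightarrow> vsum m f k \<in> carrier_vec m"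
  by (induction k) auto

lemma vsum_cong: "(\<And>i. i < k \<Longrightarrow> f i = g i) \<Longrightarrow> vsum m f k = vsum m g k"
  by (induction k) auto

lemma msum_mult_vec:
  assumes "\<And>i. i < k \<Longrightarrow> f i \<in> carrier_mat nr nc" "v \<in> carrier_vec nc"
  shows "msum nr nc f k *\<^sub>v v = vsum nr (\<lambda>i. f i *\<^sub>v v) k"
  using assms
proof (induction k)
  case 0 then show ?case by auto
next
  case (Suc k)
  have "msum nr nc f (Suc k) *\<^sub>v v = msum nr nc f k *\<^sub>v v + f k *\<^sub>v v"
    by (simp, rule add_mult_distrib_mat_vec[OF msum_carrier]) (use Suc.prems in auto)
  then show ?case using Suc by simp
qed

lemma pow_commute: fixes A :: "real mat" assumes "A \<in> carrier_mat n n" shows "A ^\<^sub>m k * A = A * A ^\<^sub>m k"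
proof (induction k)
  case 0 then show ?case using assms by simp
next
  case (Suc k)
  have "A ^\<^sub>m Suc k * A = (A ^\<^sub>m k * A) * A" by simp
  also have "\<dots> = (A * A ^\<^sub>m k) * A" using Suc by simp
  also have "\<dots> = A * (A ^\<^sub>m k * A)" using assms by (simp add: assoc_mult_mat[of _ n n _ n _ n])
  finally show ?case by simp
qed

lemma transpose_pow: fixes A :: "real mat" assumes "A \<in> carrier_mat n n" shows "transpose_mat (A ^\<^sub>m k) = transpose_mat A ^\<^sub>m k"
proof (induction k)
  case 0 then show ?case using assms by simp
next
  case (Suc k)
  have "transpose_mat (A ^\<^sub>m Suc k) = transpose_mat (A * A ^\<^sub>m k)" using pow_commute[OF assms] by simp
  also have "\<dots> = transpose_mat (A ^\<^sub>m k) * transpose_mat A" by (rule Matrix.transpose_mult) (use assms in auto)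
  finally show ?case using Suc by simp
qed

lemma real_sp_self_zero: fixes x :: "real vec" assumes "x \<bullet> x = 0" shows "x = 0\<^sub>v (dim_vec x)"
proof -
  have "(\<Sum>i\<in>{0..<dim_vec x}. x $ i * x $ i) = 0" using assms by (simp add: scalar_prod_def)
  then have "\<forall>i\<in>{0..<dim_vec x}. x $ i * x $ i = 0" by (subst sum_nonneg_eq_0_iff[symmetric]) auto
  then show ?thesis by (intro eq_vecI) auto
qed

lemma real_sp_self_nonneg: fixes x :: "real vec" shows "x \<bullet> x \<ge> 0"
  by (simp add: scalar_prod_def sum_nonneg)

lemma reach:
  fixes M Cm :: "real mat"
  assumes M: "M \<in> carrier_mat m m" and Cm: "Cm \<in> carrier_mat p m" and obs: "observable M Cm"
    and z: "z \<in> carrier_vec m"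
  shows "\<exists>u. (\<forall>i. u i \<in> carrier_vec p) \<and>
     z = vsum m (\<lambda>i. (transpose_mat M ^\<^sub>m i) *\<^sub>v (transpose_mat Cm *\<^sub>v u i)) m"
proof -
  define R where "R i = Cm * M ^\<^sub>m i" for i
  have Rc: "R i \<in> carrier_mat p m" for i using M Cm by (simp add: R_def)
  have Rtc: "transpose_mat (R i) \<in> carrier_mat m p" for i using Rc[of i] by auto
  have RtRc: "transpose_mat (R i) * R i \<in> carrier_mat m m" for i
    using Rc[of i] by (metis mult_carrier_mat transpose_carrier_mat)
  define W where "W = msum m m (\<lambda>i. transpose_mat (R i) * R i) m"
  have Wc: "W \<in> carrier_mat m m" unfolding W_def using RtRc by (intro msum_carrier) auto
  have Wv: "W *\<^sub>v v = vsum m (\<lambda>i. transpose_mat (R i) *\<^sub>v (R i *\<^sub>v v)) m" if v: "v \<in> carrier_vec m" for v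
  proof -
    have "W *\<^sub>v v = vsum m (\<lambda>i. (transpose_mat (R i) * R i) *\<^sub>v v) m"
      unfolding W_def using RtRc v by (intro msum_mult_vec) auto
    also have "\<dots> = vsum m (\<lambda>i. transpose_mat (R i) *\<^sub>v (R i *\<^sub>v v)) m"
      using Rc v by (intro vsum_cong assoc_mult_mat_vec) auto
    finally show ?thesis .
  qed
  have sp: "v \<bullet> vsum m (\<lambda>i. transpose_mat (R i) *\<^sub>v (R i *\<^sub>v v)) k = (\<Sum>i<k. (R i *\<^sub>v v) \<bullet> (R i *\<^sub>v v))"
    if v: "v \<in> carrier_vec m" for v k
  proof (induction k)
    case 0 then show ?case using v by simp
  next
    case (Suc k)
    have c1: "vsum m (\<lambda>i. transpose_mat (R i) *\<^sub>v (R i *\<^sub>v v)) k \<in> carrier_vec m"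
      using Rc Rtc v by (intro vsum_carrier) (meson mult_mat_vec_carrier)
    have "v \<bullet> (transpose_mat (R k) *\<^sub>v (R k *\<^sub>v v)) = (R k *\<^sub>v v) \<bullet> (R k *\<^sub>v v)"
      using Rc[of k] v by (subst comm_scalar_prod[of _ m]) (auto simp: transpose_vec_mult_scalar[of _ p m])
    then show ?case using Suc c1 v Rc[of k] by (simp add: scalar_prod_add_distrib[of _ m])
  qed
  have inj: "v = 0\<^sub>v m" if v: "v \<in> carrier_vec m" and Wz: "W *\<^sub>v v = 0\<^sub>v m" for v
  proof -
    have "v \<bullet> (W *\<^sub>v v) = 0" using Wz v by (simp add: scalar_prod_right_zero)
    then have "(\<Sum>i<m. (R i *\<^sub>v v) \<bullet> (R i *\<^sub>v v)) = 0" using sp[OF v, of m] Wv[OF v] by simp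
    then have "\<forall>i\<in>{..<m}. (R i *\<^sub>v v) \<bullet> (R i *\<^sub>v v) = 0"
      by (subst sum_nonneg_eq_0_iff[symmetric]) (auto simp: real_sp_self_nonneg)
    then have "\<forall>i<m. R i *\<^sub>v v = 0\<^sub>v p" using Rc by (metis real_sp_self_zero lessThan_iff carrier_matD(1) dim_mult_mat_vec)
    then have "\<forall>k<m. Cm *\<^sub>v ((M ^\<^sub>m k) *\<^sub>v v) = 0\<^sub>v p" using M Cm v
      by (auto simp: R_def assoc_mult_mat_vec[of _ p m _ m])
    then show ?thesis using obs v M Cm unfolding observable_def by auto
  qed
  have "det W \<noteq> 0" using inj det_0_iff_vec_prod_zero_field[OF Wc] by blast
  from det_non_zero_imp_unit[OF Wc this, of "()"]
  obtain Wi where Wi: "Wi \<in> carrier_mat m m" "W * Wi = 1\<^sub>m m"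
    unfolding Units_def by (auto simp: ring_mat_def)
  define u where "u i = R i *\<^sub>v (Wi *\<^sub>v z)" for i
  have "z = W *\<^sub>v (Wi *\<^sub>v z)" using Wi Wc z by (simp add: assoc_mult_mat_vec[symmetric, of _ m m _ m])
  also have "\<dots> = vsum m (\<lambda>i. transpose_mat (R i) *\<^sub>v u i) m" using Wv Wi z by (simp add: u_def)
  also have "\<dots> = vsum m (\<lambda>i. (transpose_mat M ^\<^sub>m i) *\<^sub>v (transpose_mat Cm *\<^sub>v u i)) m"
  proof (rule vsum_cong)
    fix i assume "i < m"
    have "transpose_mat (R i) = transpose_mat M ^\<^sub>m i * transpose_mat Cm"
      using M Cm by (simp add: R_def transpose_mult[of _ p m _ m] transpose_pow)
    then show "transpose_mat (R i) *\<^sub>v u i = (transpose_mat M ^\<^sub>m i) *\<^sub>v (transpose_mat Cm *\<^sub>v u i)"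
      using M Cm Rc[of i] Wi z by (simp add: u_def) (rule assoc_mult_mat_vec, auto)
  qed
  moreover have "u i \<in> carrier_vec p" for i using Rc[of i] unfolding u_def by (metis carrier_matD(1) carrier_vec_dim_vec dim_mult_mat_vec)
  ultimately show ?thesis by (intro exI[of _ u]) auto
qed


lemma mult_unit_vec: fixes A :: "real mat" assumes "A \<in> carrier_mat nr nc" "j < nc"
  shows "A *\<^sub>v unit_vec nc j = col A j"
proof (rule eq_vecI)
  fix i assume "i < dim_vec (col A j)"
  then have i: "i < nr" using assms by simp
  have "row A i \<bullet> unit_vec nc j = row A i $ j" using assms by (intro scalar_prod_right_unit) auto
  then show "(A *\<^sub>v unit_vec nc j) $ i = col A j $ i" using assms i by auto
qed (use assms in auto)

lemma mult_zero_vec: fixes A :: "'a::field mat" assumes "A \<in> carrier_mat nr nc" shows "A *\<^sub>v 0\<^sub>v nc = 0\<^sub>v nr"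
  using assms by (intro eq_vecI) (auto simp: scalar_prod_right_zero)

lemma mat_eq_by_cols: assumes "A \<in> carrier_mat nr nc" "B \<in> carrier_mat nr nc"
  "\<And>j. j < nc \<Longrightarrow> col A j = col B j" shows "A = B"
proof (rule eq_matI)
  fix i j assume "i < dim_row B" "j < dim_col B"
  then show "A $$ (i, j) = B $$ (i, j)" using assms(3)[of j] assms(1,2)
    by (metis carrier_matD(1) carrier_matD(2) index_col)
qed (use assms in auto)

context vec_space
begin

lemma span_image:
  assumes G: "G \<in> carrier_mat n n" and xs: "set xs \<subseteq> carrier_vec n" and T: "T \<subseteq> carrier_vec n"
    and img: "\<forall>x\<in>set xs. G *\<^sub>v x \<in> span T" and y: "y \<in> span (set xs)"
  shows "G *\<^sub>v y \<in> span T"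
proof -
  have "\<forall>c. G *\<^sub>v lincomb_list c xs \<in> span T" using xs img
  proof (induction xs)
    case Nil
    then show ?case using G span_zero by (auto simp: mult_zero_vec)
  next
    case (Cons x xs)
    show ?case
    proof
      fix c
      have xc: "x \<in> carrier_vec n" using Cons by auto
      have lc: "lincomb_list (c \<circ> Suc) xs \<in> carrier_vec n"
        using Cons.prems by (intro lincomb_list_carrier) auto
      have "G *\<^sub>v lincomb_list c (x # xs) = c 0 \<cdot>\<^sub>v (G *\<^sub>v x) + G *\<^sub>v lincomb_list (c \<circ> Suc) xs"
        using xc lc G by (simp add: lincomb_list_Cons mult_add_distrib_mat_vec mult_mat_vec)
      also have "\<dots> \<in> span T"
        using Cons T by (intro span_add1 smult_in_span) auto
      finally show "G *\<^sub>v lincomb_list c (x # xs) \<in> span T" .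
    qed
  qed
  moreover obtain c where "y = lincomb_list c xs"
    using y span_list_as_span[OF xs] unfolding span_list_def by auto
  ultimately show ?thesis by auto
qed

end

lemma deadbeat:
  fixes M Cm :: "real mat"
  assumes M: "M \<in> carrier_mat m m" and Cm: "Cm \<in> carrier_mat p m" and obs: "observable M Cm"
  shows "\<exists>L \<in> carrier_mat m p. (M - L * Cm) ^\<^sub>m m = 0\<^sub>m m m"
proof -
  define A where "A = transpose_mat M"
  define B where "B = transpose_mat Cm"
  have A: "A \<in> carrier_mat m m" using M by (simp add: A_def)
  have B: "B \<in> carrier_mat m p" using Cm by (simp add: B_def)
  interpret VS: vec_space "TYPE(real)" m .
  define Q where "Q k = {x \<in> carrier_vec m. \<exists>u. (\<forall>i. u i \<in> carrier_vec p) \<and>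
       (A ^\<^sub>m k) *\<^sub>v x = vsum m (\<lambda>i. (A ^\<^sub>m i) *\<^sub>v (B *\<^sub>v u i)) k}" for k
  define Rr where "Rr x T = (\<exists>w \<in> carrier_vec p. A *\<^sub>v x + B *\<^sub>v w \<in> T)" for x T
  have Q0: "Q 0 \<subseteq> {0\<^sub>v m}" using A by (auto simp: Q_def)
  have Qc: "Q k \<subseteq> carrier_vec m" for k by (auto simp: Q_def)
  have Qn: "carrier_vec m \<subseteq> Q m"
  proof
    fix x :: "real vec" assume x: "x \<in> carrier_vec m"
    have "(A ^\<^sub>m m) *\<^sub>v x \<in> carrier_vec m" using A x by (metis pow_carrier_mat mult_mat_vec_carrier)
    from reach[OF M Cm obs this] show "x \<in> Q m" using x by (auto simp: Q_def A_def B_def)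
  qed
  have Qs: "Rr x (Q k)" if x: "x \<in> Q (Suc k)" for k x
  proof -
    from x obtain u where u: "\<forall>i. u i \<in> carrier_vec p" "x \<in> carrier_vec m"
      "(A ^\<^sub>m Suc k) *\<^sub>v x = vsum m (\<lambda>i. (A ^\<^sub>m i) *\<^sub>v (B *\<^sub>v u i)) (Suc k)"
      by (auto simp: Q_def)
    define X where "X = vsum m (\<lambda>i. (A ^\<^sub>m i) *\<^sub>v (B *\<^sub>v u i)) k"
    define c where "c = (A ^\<^sub>m k) *\<^sub>v (B *\<^sub>v u k)"
    have Xc: "X \<in> carrier_vec m" unfolding X_def using A B u by (intro vsum_carrier) (metis pow_carrier_mat mult_mat_vec_carrier)
    have cc: "c \<in> carrier_vec m" unfolding c_def using A B u by (metis pow_carrier_mat mult_mat_vec_carrier)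
    define w where "w = (-1) \<cdot>\<^sub>v u k"
    have wc: "w \<in> carrier_vec p" using u by (simp add: w_def)
    have Ax: "A *\<^sub>v x \<in> carrier_vec m" using A u by simp
    have Bw: "B *\<^sub>v w \<in> carrier_vec m" using B wc by simp
    have e1: "(A ^\<^sub>m k) *\<^sub>v (A *\<^sub>v x) = X + c"
      using u(3) A u(2) by (simp add: X_def c_def assoc_mult_mat_vec[of _ m m _ m])
    have "(A ^\<^sub>m k) *\<^sub>v (A *\<^sub>v x + B *\<^sub>v w) = (A ^\<^sub>m k) *\<^sub>v (A *\<^sub>v x) + (A ^\<^sub>m k) *\<^sub>v (B *\<^sub>v w)"
      using A Ax Bw by (simp add: mult_add_distrib_mat_vec[of _ m m])
    also have "(A ^\<^sub>m k) *\<^sub>v (B *\<^sub>v w) = (-1) \<cdot>\<^sub>v c"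
    proof -
      have "B *\<^sub>v w = (-1) \<cdot>\<^sub>v (B *\<^sub>v u k)" unfolding w_def using mult_mat_vec[OF B] u by auto
      moreover have "B *\<^sub>v u k \<in> carrier_vec m" using B u by auto
      ultimately show ?thesis unfolding c_def using mult_mat_vec[OF pow_carrier_mat[OF A]] by auto
    qed
    also have "(A ^\<^sub>m k) *\<^sub>v (A *\<^sub>v x) + (-1) \<cdot>\<^sub>v c = X"
      unfolding e1 using Xc cc by (intro eq_vecI) auto
    finally have "A *\<^sub>v x + B *\<^sub>v w \<in> Q k" using Ax Bw u(1) by (auto simp: Q_def X_def)
    then show ?thesis using wc by (auto simp: Rr_def)
  qed
  obtain bs where bs: "length bs = m" "distinct bs" "set bs \<subseteq> carrier_vec m" "VS.lin_indpt (set bs)"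
    "\<forall>i<m. Rr (bs ! i) (VS.span (set (take i bs)))"
    using VS.greedy_chain[of Rr Q m] Q0 Qc Qn Qs by (auto simp: Rr_def)
  have bc: "bs ! i \<in> carrier_vec m" if "i < m" for i using bs that by auto
  have "VS.basis (set bs)"
    by (rule VS.dim_li_is_basis) (use bs in \<open>auto simp: VS.fin_dim VS.dim_is_n distinct_card\<close>)
  then have spbs: "VS.span (set bs) = carrier_vec m" by (simp add: VS.basis_def)
  define P where "P = mat_of_cols m bs"
  have P: "P \<in> carrier_mat m m" using bs mat_of_cols_carrier(1)[of m bs] by (simp add: P_def)
  have "\<forall>c. \<exists>a. c < m \<longrightarrow> unit_vec m c = P *\<^sub>v vec m a"
  proof
    fix c
    show "\<exists>a. c < m \<longrightarrow> unit_vec m c = P *\<^sub>v vec m a"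
    proof (cases "c < m")
      case True
      then have "unit_vec m c \<in> VS.span_list bs" using spbs VS.span_list_as_span[OF bs(3)] by auto
      then obtain a where "unit_vec m c = VS.lincomb_list a bs" unfolding VS.span_list_def by auto
      moreover have "\<forall>w\<in>set bs. dim_vec w = m" using bs(3) by auto
      ultimately show ?thesis using bs(1) VS.lincomb_list_as_mat_mult[of bs a] by (auto simp: P_def)
    qed auto
  qed
  then obtain \<alpha> where \<alpha>: "\<And>c. c < m \<Longrightarrow> unit_vec m c = P *\<^sub>v vec m (\<alpha> c)" by metis
  define Y where "Y = mat m m (\<lambda>(i,c). \<alpha> c i)"
  have Y: "Y \<in> carrier_mat m m" by (simp add: Y_def)
  have PY: "P * Y = 1\<^sub>m m"
  proof (rule mat_eq_by_cols[of _ m m])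
    fix j assume j: "j < m"
    have "col (P * Y) j = P *\<^sub>v col Y j" by (rule col_mult2[OF P Y j])
    also have "col Y j = vec m (\<alpha> j)" using j by (simp add: Y_def col_mat)
    finally show "col (P * Y) j = col (1\<^sub>m m) j" using \<alpha>[OF j] j by simp
  qed (use P Y in auto)
  have YP: "Y * P = 1\<^sub>m m" using mat_mult_left_right_inverse[OF P Y PY] .
  have Yb: "Y *\<^sub>v (bs ! i) = unit_vec m i" if i: "i < m" for i
  proof -
    have "bs ! i = col P i" using i bs(1) bc[OF i] unfolding P_def by (metis col_mat_of_cols)
    then have "Y *\<^sub>v (bs ! i) = col (Y * P) i" using col_mult2[OF Y P i] by simp
    then show ?thesis using YP i by simp
  qed
  have "\<forall>i. \<exists>w. i < m \<longrightarrow> w \<in> carrier_vec p \<and> A *\<^sub>v bs ! i + B *\<^sub>v w \<in> VS.span (set (take i bs))"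
    using bs(5) by (auto simp: Rr_def)
  then obtain us where us: "\<And>i. i < m \<Longrightarrow> us i \<in> carrier_vec p \<and>
      A *\<^sub>v bs ! i + B *\<^sub>v us i \<in> VS.span (set (take i bs))" by metis
  define U where "U = mat_of_cols p (map us [0..<m])"
  have U: "U \<in> carrier_mat p m" using mat_of_cols_carrier(1)[of p "map us [0..<m]"] by (simp add: U_def)
  have Uu: "U *\<^sub>v unit_vec m i = us i" if "i < m" for i
  proof -
    have "col U i = us i" unfolding U_def using that us[OF that] by (subst col_mat_of_cols) auto
    then show ?thesis using mult_unit_vec[OF U that] by simp
  qed
  define F where "F = U * Y"
  have F: "F \<in> carrier_mat p m" using U Y by (simp add: F_def)
  define G where "G = A + B * F"
  have G: "G \<in> carrier_mat m m" using A B F by (simp add: G_def)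
  have Gb: "G *\<^sub>v (bs ! i) \<in> VS.span (set (take i bs))" if i: "i < m" for i
  proof -
    have "G *\<^sub>v (bs ! i) = A *\<^sub>v bs ! i + B *\<^sub>v (U *\<^sub>v (Y *\<^sub>v bs ! i))"
      using A B U Y bc[OF i] by (simp add: G_def F_def add_mult_distrib_mat_vec[of _ m m] assoc_mult_mat_vec[of _ m p _ m] assoc_mult_mat_vec[of _ p m _ m])
    also have "\<dots> = A *\<^sub>v bs ! i + B *\<^sub>v us i" using Yb[OF i] Uu[OF i] by simp
    finally show ?thesis using us[OF i] by simp
  qed
  have nil: "\<forall>i \<le> m. \<forall>y \<in> VS.span (set (take i bs)). (G ^\<^sub>m r) *\<^sub>v y \<in> VS.span (set (take (i - r) bs))" for r
  proof (induction r)
    case 0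
    show ?case
    proof (intro allI impI ballI)
      fix i y assume y: "y \<in> VS.span (set (take i bs))"
      have tc: "set (take i bs) \<subseteq> carrier_vec m" using bs(3) by (meson set_take_subset subset_trans)
      have yc: "y \<in> carrier_vec m" using y VS.span_is_subset2[OF tc] by auto
      have "(G ^\<^sub>m 0) *\<^sub>v y = y" using G yc by simp
      then show "(G ^\<^sub>m 0) *\<^sub>v y \<in> VS.span (set (take (i - 0) bs))" using y by simp
    qed
  next
    case (Suc r)
    show ?case
    proof (intro allI impI ballI)
      fix i y assume i: "i \<le> m" and y: "y \<in> VS.span (set (take i bs))"
      have tc: "set (take j bs) \<subseteq> carrier_vec m" for j using bs(3) by (meson set_take_subset subset_trans)
      have yc: "y \<in> carrier_vec m" using y VS.span_is_subset2[OF tc[of i]] by auto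
      have "G *\<^sub>v y \<in> VS.span (set (take (i - 1) bs))"
      proof (rule VS.span_image[OF G tc tc _ y], rule ballI)
        fix x assume "x \<in> set (take i bs)"
        then obtain j where j: "j < i" "x = bs ! j" using i bs(1)
          by (metis in_set_conv_nth length_take min.absorb4 nth_take le_neq_implies_less min_def)
        have "G *\<^sub>v x \<in> VS.span (set (take j bs))" using Gb[of j] j i by simp
        moreover have "VS.span (set (take j bs)) \<subseteq> VS.span (set (take (i - 1) bs))"
          using j by (intro VS.span_is_monotone set_take_subset_set_take) auto
        ultimately show "G *\<^sub>v x \<in> VS.span (set (take (i - 1) bs))" by auto
      qed
      then have "(G ^\<^sub>m r) *\<^sub>v (G *\<^sub>v y) \<in> VS.span (set (take (i - Suc r) bs))"
      proof -
        have "i - 1 \<le> m" using i by simp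
        from Suc.IH[rule_format, OF this \<open>G *\<^sub>v y \<in> VS.span (set (take (i - 1) bs))\<close>]
        show ?thesis by (metis diff_Suc_eq_diff_pred)
      qed
      moreover have "(G ^\<^sub>m Suc r) *\<^sub>v y = (G ^\<^sub>m r) *\<^sub>v (G *\<^sub>v y)"
        using G yc by (simp add: assoc_mult_mat_vec[of _ m m _ m])
      ultimately show "(G ^\<^sub>m Suc r) *\<^sub>v y \<in> VS.span (set (take (i - Suc r) bs))" by simp
    qed
  qed
  have Gm0: "(G ^\<^sub>m m) *\<^sub>v y = 0\<^sub>v m" if y: "y \<in> carrier_vec m" for y
    using nil[of m] y spbs bs(1) VS.span_empty by auto
  have Gm: "G ^\<^sub>m m = 0\<^sub>m m m"
  proof (rule mat_eq_by_cols[of _ m m])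
    fix j assume j: "j < m"
    have "col (G ^\<^sub>m m) j = (G ^\<^sub>m m) *\<^sub>v unit_vec m j" using mult_unit_vec[OF pow_carrier_mat[OF G] j] by simp
    also have "\<dots> = 0\<^sub>v m" using Gm0 j by simp
    finally show "col (G ^\<^sub>m m) j = col (0\<^sub>m m m) j" using j by simp
  qed (use G in simp_all)
  define L where "L = (-1) \<cdot>\<^sub>m transpose_mat F"
  have L: "L \<in> carrier_mat m p" using F by (simp add: L_def)
  have BF: "B * F \<in> carrier_mat m m" using B F by simp
  have "transpose_mat G = transpose_mat A + transpose_mat (B * F)"
    unfolding G_def by (rule transpose_add[OF A BF])
  also have "transpose_mat (B * F) = transpose_mat F * transpose_mat B"
    by (rule Matrix.transpose_mult[OF B F])
  also have "transpose_mat A = M" by (simp add: A_def)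
  also have "transpose_mat B = Cm" by (simp add: B_def)
  finally have GT: "transpose_mat G = M + transpose_mat F * Cm" .
  have FC: "transpose_mat F * Cm \<in> carrier_mat m m" using F Cm by simp
  have "L * Cm = (-1) \<cdot>\<^sub>m (transpose_mat F * Cm)"
    unfolding L_def by (rule mult_smult_assoc_mat) (use F Cm in auto)
  then have "M - L * Cm = M + transpose_mat F * Cm"
    using FC M by (intro eq_matI) auto
  then have "transpose_mat G = M - L * Cm" using GT by simp
  then have "(M - L * Cm) ^\<^sub>m m = transpose_mat (G ^\<^sub>m m)" using transpose_pow[OF G] by simp
  then show ?thesis using L Gm by auto
qed


lemma vsum_index: assumes "\<And>i. i < k \<Longrightarrow> f i \<in> carrier_vec m" "a < m"
  shows "vsum m f k $ a = (\<Sum>i<k. f i $ a)"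
  using assms
proof (induction k)
  case (Suc k)
  have "vsum m f k \<in> carrier_vec m" using Suc.prems by (intro vsum_carrier) auto
  have "f k \<in> carrier_vec m" using Suc.prems by auto
  then have ak: "a < dim_vec (f k)" using Suc.prems(2) by simp
  have "(vsum m f k + f k) $ a = vsum m f k $ a + f k $ a"
    by (rule index_add_vec(1)[OF ak])
  then show ?case using Suc by simp
qed simp

lemma off_Suc: "off d (Suc j) = off d j + d j" by (simp add: off_def)

lemma off_mono: "j \<le> q \<Longrightarrow> off d j \<le> off d q"
  unfolding off_def by (rule sum_mono2) auto

lemma off_lt: "j < N \<Longrightarrow> a < d j \<Longrightarrow> off d j + a < off d N"
  using off_mono[of "Suc j" N d] by (simp add: off_Suc)

lemma sum_split_add: "(\<Sum>c<a + (b::nat). g c) = (\<Sum>c<a. g c) + (\<Sum>c<b. g (a + c))"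
  by (induction b) (auto simp: add.assoc)

lemma sum_off: "(\<Sum>c<off d N. g c) = (\<Sum>q<N. \<Sum>b<d q. g (off d q + b))"
  by (induction N) (auto simp: off_Suc sum_split_add, simp add: off_def)

lemma sp_sum: "v \<bullet> w = (\<Sum>i<dim_vec w. v $ i * w $ i)"
  by (simp add: scalar_prod_def atLeast0LessThan)

lemma blk_carrier[simp]: "blk d M j q \<in> carrier_mat (d j) (d q)"
  by (simp add: blk_def subm_def)

lemma cblk_carrier[simp]: "cblk d M q \<in> carrier_mat (dim_row M) (d q)"
  by (simp add: cblk_def subm_def)

lemma vblk_carrier[simp]: "vblk d z j \<in> carrier_vec (d j)"
  by (simp add: vblk_def)

lemma blk_mult_vblk_index:
  assumes "a < d j"
  shows "(blk d M j q *\<^sub>v vblk d z q) $ a = (\<Sum>b<d q. M $$ (off d j + a, off d q + b) * z $ (off d q + b))"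
  using assms by (simp add: blk_def subm_def vblk_def sp_sum)

lemma cblk_mult_vblk_index:
  assumes "a < dim_row M"
  shows "(cblk d M q *\<^sub>v vblk d z q) $ a = (\<Sum>b<d q. M $$ (a, off d q + b) * z $ (off d q + b))"
  using assms by (simp add: cblk_def subm_def vblk_def sp_sum)

lemma vblk_mult:
  fixes M :: "real mat"
  assumes M: "M \<in> carrier_mat n n" and z: "z \<in> carrier_vec n" and dN: "off d N = n" and j: "j < N"
  shows "vblk d (M *\<^sub>v z) j = vsum (d j) (\<lambda>q. blk d M j q *\<^sub>v vblk d z q) N"
proof (rule eq_vecI)
  have cc: "\<And>q. q < N \<Longrightarrow> blk d M j q *\<^sub>v vblk d z q \<in> carrier_vec (d j)"
    by (metis blk_carrier vblk_carrier mult_mat_vec_carrier)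
  have vc: "vsum (d j) (\<lambda>q. blk d M j q *\<^sub>v vblk d z q) N \<in> carrier_vec (d j)"
    by (rule vsum_carrier) (rule cc)
  show "dim_vec (vblk d (M *\<^sub>v z) j) = dim_vec (vsum (d j) (\<lambda>q. blk d M j q *\<^sub>v vblk d z q) N)"
    using vc by (simp add: vblk_def)
  fix a assume "a < dim_vec (vsum (d j) (\<lambda>q. blk d M j q *\<^sub>v vblk d z q) N)"
  then have a: "a < d j" using vc by simp
  have r: "off d j + a < n" using off_lt[of j N a d, OF j a] dN by simp
  have "vblk d (M *\<^sub>v z) j $ a = (\<Sum>c<off d N. M $$ (off d j + a, c) * z $ c)"
    using M z r a dN by (simp add: vblk_def sp_sum)
  also have "\<dots> = (\<Sum>q<N. \<Sum>b<d q. M $$ (off d j + a, off d q + b) * z $ (off d q + b))"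
    by (rule sum_off)
  also have "\<dots> = vsum (d j) (\<lambda>q. blk d M j q *\<^sub>v vblk d z q) N $ a"
    using a by (simp add: vsum_index[OF cc a] blk_mult_vblk_index)
  finally show "vblk d (M *\<^sub>v z) j $ a = vsum (d j) (\<lambda>q. blk d M j q *\<^sub>v vblk d z q) N $ a" .
qed

lemma cmult_blocks:
  fixes M :: "real mat"
  assumes M: "M \<in> carrier_mat r n" and z: "z \<in> carrier_vec n" and dN: "off d N = n"
  shows "M *\<^sub>v z = vsum r (\<lambda>q. cblk d M q *\<^sub>v vblk d z q) N"
proof (rule eq_vecI)
  have cc: "\<And>q. q < N \<Longrightarrow> cblk d M q *\<^sub>v vblk d z q \<in> carrier_vec r"
    using M by (metis cblk_carrier vblk_carrier mult_mat_vec_carrier carrier_matD(1))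
  have vc: "vsum r (\<lambda>q. cblk d M q *\<^sub>v vblk d z q) N \<in> carrier_vec r"
    by (rule vsum_carrier) (rule cc)
  show "dim_vec (M *\<^sub>v z) = dim_vec (vsum r (\<lambda>q. cblk d M q *\<^sub>v vblk d z q) N)"
    using vc M by simp
  fix a assume "a < dim_vec (vsum r (\<lambda>q. cblk d M q *\<^sub>v vblk d z q) N)"
  then have a: "a < r" using vc by simp
  have "(M *\<^sub>v z) $ a = (\<Sum>c<off d N. M $$ (a, c) * z $ c)"
    using M z a dN by (simp add: sp_sum)
  also have "\<dots> = (\<Sum>q<N. \<Sum>b<d q. M $$ (a, off d q + b) * z $ (off d q + b))"
    by (rule sum_off)
  also have "\<dots> = vsum r (\<lambda>q. cblk d M q *\<^sub>v vblk d z q) N $ a"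
    using a M by (simp add: vsum_index[OF cc a] cblk_mult_vblk_index)
  finally show "(M *\<^sub>v z) $ a = vsum r (\<lambda>q. cblk d M q *\<^sub>v vblk d z q) N $ a" .
qed

lemma least_block:
  assumes c: "c < off d N"
  defines "j \<equiv> LEAST j. c < off d (Suc j)"
  shows "j < N \<and> off d j \<le> c \<and> c < off d j + d j"
proof -
  have ex: "\<exists>j. c < off d (Suc j)"
  proof (cases N)
    case 0 then show ?thesis using c by (simp add: off_def)
  next
    case (Suc N') then show ?thesis using c by auto
  qed
  have jl: "c < off d (Suc j)" unfolding j_def by (rule LeastI_ex[OF ex])
  have jN: "j < N"
  proof (rule ccontr)
    assume "\<not> j < N"
    then have "N \<le> j" by simp
    moreover have "N > 0" using c by (cases N) (auto simp: off_def)
    then have "c < off d (Suc (N - 1))" using c by simp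
    then have "j \<le> N - 1" unfolding j_def by (rule Least_le)
    ultimately show False using \<open>N > 0\<close> by simp
  qed
  have lo: "off d j \<le> c"
  proof (cases j)
    case 0 then show ?thesis by (simp add: off_def)
  next
    case (Suc j')
    have "\<not> c < off d (Suc j')"
    proof
      assume "c < off d (Suc j')"
      then have "j \<le> j'" unfolding j_def by (rule Least_le)
      then show False using Suc by simp
    qed
    then show ?thesis using Suc by simp
  qed
  show ?thesis using jN lo jl by (simp add: off_Suc)
qed

lemma stack_vblk:
  assumes z: "z \<in> carrier_vec (off d N)" and eq: "\<And>j. j < N \<Longrightarrow> zs j = vblk d z j"
  shows "stack d N zs = z"
proof (rule eq_vecI)
  show "dim_vec (stack d N zs) = dim_vec z" using z by (simp add: stack_def)
  fix c assume "c < dim_vec z"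
  then have c: "c < off d N" using z by simp
  define j where "j = (LEAST j. c < off d (Suc j))"
  have j: "j < N" "off d j \<le> c" "c < off d j + d j" using least_block[OF c] unfolding j_def by auto
  have "stack d N zs $ c = zs j $ (c - off d j)" using c by (simp add: stack_def j_def Let_def)
  also have "\<dots> = z $ c"
  proof -
    have l: "c - off d j < d j" using j by arith
    have e: "off d j + (c - off d j) = c" using j by arith
    show ?thesis using eq[OF j(1)] l e by (simp add: vblk_def)
  qed
  finally show "stack d N zs $ c = z $ c" .
qed


lemma rtrancl_exit:
  assumes "(a, b) \<in> R\<^sup>*" "a \<in> X" "b \<notin> X"
  shows "\<exists>x y. (x, y) \<in> R \<and> x \<in> X \<and> y \<notin> X"
  using assms
proof (induction rule: rtrancl_induct)
  case base then show ?case by simp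
next
  case (step y z)
  then show ?case by (cases "y \<in> X") auto
qed

lemma spread:
  fixes good :: "nat \<Rightarrow> nat \<Rightarrow> bool"
  assumes mono1: "\<And>k i. i < N \<Longrightarrow> good k i \<Longrightarrow> good (Suc k) i"
    and spr: "\<And>k i l. i < N \<Longrightarrow> l < N \<Longrightarrow> i \<noteq> j \<Longrightarrow> l \<in> nbrs N E k i \<Longrightarrow> good k l \<Longrightarrow> good (Suc k) i"
    and src: "\<And>k. S \<le> k \<Longrightarrow> good k j"
    and j: "j < N"
    and tm: "strict_mono t"
    and conn: "\<And>q. union_strongly_connected N E (t q) (t (Suc q) - 1)"
  shows "\<forall>k \<ge> t (S + N). \<forall>i < N. good k i"
proof -
  have monole: "good k' i" if "good k i" "k \<le> k'" "i < N" for k k' i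
    using that(2,1)
  proof (induction k' rule: dec_induct)
    case base then show ?case .
  next
    case (step m) then show ?case using mono1 that(3) by blast
  qed
  have tq: "q \<le> t q" for q using tm by (rule seq_suble)
  have tlt: "t q < t (Suc q)" for q using tm by (simp add: strict_mono_def)
  define Gs where "Gs q = {i. i < N \<and> good (t q) i}" for q
  have Gfin: "finite (Gs q)" for q by (simp add: Gs_def)
  have Gsub: "Gs q \<subseteq> {..<N}" for q by (auto simp: Gs_def)
  have Gmono: "Gs q \<subseteq> Gs (Suc q)" for q
    using monole tlt by (auto simp: Gs_def less_imp_le)
  have step: "min N (Suc (card (Gs q))) \<le> card (Gs (Suc q))" if jq: "j \<in> Gs q" for q
  proof (cases "Gs q = {..<N}")
    case True
    then have "Gs (Suc q) = {..<N}" using Gmono[of q] Gsub[of "Suc q"] by auto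
    then show ?thesis by simp
  next
    case False
    then obtain b where b: "b < N" "b \<notin> Gs q" using Gsub[of q] by auto
    have "(j, b) \<in> ((\<Union>\<tau> \<in> {t q..t (Suc q) - 1}. E \<tau>) \<inter> ({..<N} \<times> {..<N}))\<^sup>*"
    proof -
      have "\<forall>a<N. \<forall>b<N. (a, b) \<in> ((\<Union>\<tau> \<in> {t q..t (Suc q) - 1}. E \<tau>) \<inter> ({..<N} \<times> {..<N}))\<^sup>*"
        using conn[of q] unfolding union_strongly_connected_def .
      then show ?thesis using j b(1) by blast
    qed
    from rtrancl_exit[OF this jq b(2)] obtain x y where
      xy: "(x, y) \<in> (\<Union>\<tau> \<in> {t q..t (Suc q) - 1}. E \<tau>) \<inter> ({..<N} \<times> {..<N})" "x \<in> Gs q" "y \<notin> Gs q"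
      by (elim exE conjE) (rule that)
    then obtain \<tau> where \<tau>: "\<tau> \<in> {t q..t (Suc q) - 1}" "(x, y) \<in> E \<tau>" "x < N" "y < N" by auto
    have xy_ne: "x \<noteq> y" using xy by auto
    have yj: "y \<noteq> j" using xy jq by auto
    have gx: "good \<tau> x" using monole[of "t q" x \<tau>] xy(2) \<tau> by (auto simp: Gs_def)
    have "x \<in> nbrs N E \<tau> y" using \<tau> xy_ne by (auto simp: nbrs_def)
    then have gy: "good (Suc \<tau>) y" using spr[OF \<tau>(4) \<tau>(3) yj _ gx] by simp
    have "Suc \<tau> \<le> t (Suc q)" using \<tau>(1) tlt[of q] by auto
    then have "good (t (Suc q)) y" using monole[OF gy _ \<tau>(4)] by simp
    then have "insert y (Gs q) \<subseteq> Gs (Suc q)" using Gmono[of q] \<tau>(4) by (auto simp: Gs_def)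
    then have "card (insert y (Gs q)) \<le> card (Gs (Suc q))" using Gfin by (intro card_mono) auto
    then show ?thesis using xy(3) Gfin[of q] by simp
  qed
  have jin: "j \<in> Gs q" if "S \<le> q" for q
  proof -
    have "S \<le> t q" using tq[of q] that by linarith
    then show ?thesis using src[of "t q"] j unfolding Gs_def by blast
  qed
  have iter: "min N (Suc m) \<le> card (Gs (S + m))" for m
  proof (induction m)
    case 0
    have "{j} \<subseteq> Gs S" using jin by auto
    from card_mono[OF Gfin this] have "1 \<le> card (Gs S)" by simp
    then show ?case by simp
  next
    case (Suc m)
    have "min N (Suc (card (Gs (S + m)))) \<le> card (Gs (Suc (S + m)))" using step jin by simp
    then show ?case using Suc by simp
  qed
  have "N \<le> card (Gs (S + N))" using iter[of N] by simp
  then have all: "Gs (S + N) = {..<N}" using Gsub[of "S + N"] by (intro card_seteq) auto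
  show ?thesis
  proof (intro allI impI)
    fix k i assume k: "t (S + N) \<le> k" and i: "i < N"
    have "good (t (S + N)) i" using all i by (auto simp: Gs_def)
    then show "good k i" using monole k i by blast
  qed
qed


lemma step_facts:
  fixes tau :: "nat \<Rightarrow> nat \<Rightarrow> nat \<Rightarrow> nat option" and zh :: "nat \<Rightarrow> nat \<Rightarrow> nat \<Rightarrow> real vec"
  assumes cl: "(let M = {l \<in> nbrs N E k i. tau k l j \<noteq> None};
            F = (case tau k i j of None \<Rightarrow> M
                 | Some ti \<Rightarrow> {l \<in> M. the (tau k l j) < ti});
            own = vsum (d j) (\<lambda>q. blk d Ab j q *\<^sub>v zh k i q) j
        in if F \<noteq> {} then
             (\<exists>u \<in> F. (\<forall>l \<in> F. the (tau k u j) \<le> the (tau k l j)) \<and>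
                tau (Suc k) i j = Some (the (tau k u j) + 1) \<and>
                zh (Suc k) i j = blk d Ab j j *\<^sub>v zh k u j + own)
           else
             tau (Suc k) i j = map_option Suc (tau k i j) \<and>
             zh (Suc k) i j = blk d Ab j j *\<^sub>v zh k i j + own)"
  shows step_nb: "\<And>l sl. l \<in> nbrs N E k i \<Longrightarrow> tau k l j = Some sl \<Longrightarrow> \<exists>s'. tau (Suc k) i j = Some s' \<and> s' \<le> sl + 1"
    and step_own: "\<And>si. tau k i j = Some si \<Longrightarrow> \<exists>s'. tau (Suc k) i j = Some s' \<and> s' \<le> si + 1"
    and step_src: "\<And>s. tau (Suc k) i j = Some s \<Longrightarrow>
       (\<exists>u \<in> nbrs N E k i. \<exists>su. tau k u j = Some su \<and> s = su + 1 \<and>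
           zh (Suc k) i j = blk d Ab j j *\<^sub>v zh k u j + vsum (d j) (\<lambda>q. blk d Ab j q *\<^sub>v zh k i q) j)
     \<or> (\<exists>si. tau k i j = Some si \<and> s = si + 1 \<and>
           zh (Suc k) i j = blk d Ab j j *\<^sub>v zh k i j + vsum (d j) (\<lambda>q. blk d Ab j q *\<^sub>v zh k i q) j)"
    and step_shape: "\<exists>w. zh (Suc k) i j = blk d Ab j j *\<^sub>v w + vsum (d j) (\<lambda>q. blk d Ab j q *\<^sub>v zh k i q) j"
proof -
  define Ms where "Ms = {l \<in> nbrs N E k i. tau k l j \<noteq> None}"
  define Fs where "Fs = (case tau k i j of None \<Rightarrow> Ms | Some ti \<Rightarrow> {l \<in> Ms. the (tau k l j) < ti})"
  define own where "own = vsum (d j) (\<lambda>q. blk d Ab j q *\<^sub>v zh k i q) j"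
  have c2: "if Fs \<noteq> {} then
             (\<exists>u \<in> Fs. (\<forall>l \<in> Fs. the (tau k u j) \<le> the (tau k l j)) \<and>
                tau (Suc k) i j = Some (the (tau k u j) + 1) \<and>
                zh (Suc k) i j = blk d Ab j j *\<^sub>v zh k u j + own)
           else
             tau (Suc k) i j = map_option Suc (tau k i j) \<and>
             zh (Suc k) i j = blk d Ab j j *\<^sub>v zh k i j + own"
    using cl unfolding Ms_def Fs_def own_def by (simp only: Let_def)
  show "\<exists>w. zh (Suc k) i j = blk d Ab j j *\<^sub>v w + vsum (d j) (\<lambda>q. blk d Ab j q *\<^sub>v zh k i q) j"
    using c2 unfolding own_def by (cases "Fs = {}") auto
  have FsM: "Fs \<subseteq> Ms" by (auto simp: Fs_def split: option.splits)
  show "\<exists>s'. tau (Suc k) i j = Some s' \<and> s' \<le> sl + 1" if l: "l \<in> nbrs N E k i" "tau k l j = Some sl" for l sl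
  proof (cases "Fs = {}")
    case False
    then obtain u where u: "u \<in> Fs" "\<forall>l \<in> Fs. the (tau k u j) \<le> the (tau k l j)"
      "tau (Suc k) i j = Some (the (tau k u j) + 1)" using c2 by auto
    have "the (tau k u j) \<le> sl"
    proof (cases "l \<in> Fs")
      case True then show ?thesis using u(2) l by force
    next
      case lF: False
      have lM: "l \<in> Ms" using l by (auto simp: Ms_def)
      then obtain ti where ti: "tau k i j = Some ti" using lF by (cases "tau k i j") (auto simp: Fs_def)
      then have "\<not> sl < ti" using lF lM l by (auto simp: Fs_def)
      moreover have "the (tau k u j) < ti" using u(1) ti by (auto simp: Fs_def)
      ultimately show ?thesis by simp
    qed
    then show ?thesis using u(3) by auto
  next
    case True
    have lM: "l \<in> Ms" using l by (auto simp: Ms_def)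
    then obtain ti where ti: "tau k i j = Some ti" using True by (cases "tau k i j") (auto simp: Fs_def)
    then have "\<not> sl < ti" using True lM l by (auto simp: Fs_def)
    moreover have "tau (Suc k) i j = Some (Suc ti)" using c2 True ti by simp
    ultimately show ?thesis by auto
  qed
  show "\<exists>s'. tau (Suc k) i j = Some s' \<and> s' \<le> si + 1" if si: "tau k i j = Some si" for si
  proof (cases "Fs = {}")
    case False
    then obtain u where u: "u \<in> Fs" "tau (Suc k) i j = Some (the (tau k u j) + 1)" using c2 by auto
    have "the (tau k u j) < si" using u(1) si by (auto simp: Fs_def)
    then show ?thesis using u(2) by auto
  next
    case True
    then show ?thesis using c2 si by simp
  qed
  show "(\<exists>u \<in> nbrs N E k i. \<exists>su. tau k u j = Some su \<and> s = su + 1 \<and>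
           zh (Suc k) i j = blk d Ab j j *\<^sub>v zh k u j + vsum (d j) (\<lambda>q. blk d Ab j q *\<^sub>v zh k i q) j)
     \<or> (\<exists>si. tau k i j = Some si \<and> s = si + 1 \<and>
           zh (Suc k) i j = blk d Ab j j *\<^sub>v zh k i j + vsum (d j) (\<lambda>q. blk d Ab j q *\<^sub>v zh k i q) j)"
    if s: "tau (Suc k) i j = Some s" for s
  proof (cases "Fs = {}")
    case False
    then obtain u where u: "u \<in> Fs" "tau (Suc k) i j = Some (the (tau k u j) + 1)"
      "zh (Suc k) i j = blk d Ab j j *\<^sub>v zh k u j + own" using c2 by auto
    have uM: "u \<in> Ms" using u(1) FsM by auto
    then obtain su where su: "tau k u j = Some su" by (auto simp: Ms_def)
    have "u \<in> nbrs N E k i" using uM by (auto simp: Ms_def)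
    then show ?thesis using su u s by (auto simp: own_def)
  next
    case True
    then have t2: "tau (Suc k) i j = map_option Suc (tau k i j)" "zh (Suc k) i j = blk d Ab j j *\<^sub>v zh k i j + own"
      using c2 by auto
    then obtain si where "tau k i j = Some si" using s by (cases "tau k i j") auto
    then show ?thesis using t2 s by (auto simp: own_def)
  qed
qed


lemma zero_mat_mult_vec: fixes v :: "real vec" assumes "v \<in> carrier_vec nc"
  shows "0\<^sub>m nr nc *\<^sub>v v = 0\<^sub>v nr"
  using assms by (intro eq_vecI) (auto simp: sp_sum)

lemma vsum_upto:
  assumes c: "\<And>q. q < N \<Longrightarrow> f q \<in> carrier_vec m"
    and z: "\<And>q. j < q \<Longrightarrow> q < N \<Longrightarrow> f q = 0\<^sub>v m" and j: "j < N"
  shows "vsum m f N = vsum m f j + f j"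
proof -
  have "Suc j \<le> N' \<Longrightarrow> N' \<le> N \<Longrightarrow> vsum m f N' = vsum m f (Suc j)" for N'
  proof (induction N' rule: dec_induct)
    case base then show ?case by simp
  next
    case (step N')
    have "vsum m f (Suc N') = vsum m f N' + 0\<^sub>v m" using step z[of N'] by simp
    also have "\<dots> = vsum m f N'" using c step by (intro right_zero_vec vsum_carrier) auto
    finally show ?case using step by simp
  qed
  from this[of N] j show ?thesis by simp
qed

lemma vsum_diff:
  assumes "\<And>q. q < k \<Longrightarrow> f q \<in> carrier_vec m" "\<And>q. q < k \<Longrightarrow> g q \<in> carrier_vec m"
  shows "vsum m (\<lambda>q. f q - g q) k = vsum m f k - vsum m g k"
proof (rule eq_vecI)
  have cf: "vsum m f k \<in> carrier_vec m" using assms by (intro vsum_carrier) auto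
  have cg: "vsum m g k \<in> carrier_vec m" using assms by (intro vsum_carrier) auto
  have cd: "vsum m (\<lambda>q. f q - g q) k \<in> carrier_vec m" using assms by (intro vsum_carrier) auto
  show "dim_vec (vsum m (\<lambda>q. f q - g q) k) = dim_vec (vsum m f k - vsum m g k)" using cf cg cd by simp
  fix a assume "a < dim_vec (vsum m f k - vsum m g k)"
  then have a: "a < m" using cg by simp
  have "vsum m (\<lambda>q. f q - g q) k $ a = (\<Sum>q<k. (f q - g q) $ a)"
    by (rule vsum_index) (use assms a in auto)
  also have "\<dots> = (\<Sum>q<k. f q $ a - g q $ a)"
  proof (rule sum.cong)
    fix q assume "q \<in> {..<k}"
    then have "dim_vec (g q) = m" using assms by auto
    then show "(f q - g q) $ a = f q $ a - g q $ a" using a by simp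
  qed simp
  also have "\<dots> = (\<Sum>q<k. f q $ a) - (\<Sum>q<k. g q $ a)" by (rule sum_subtractf)
  also have "\<dots> = vsum m f k $ a - vsum m g k $ a" using assms a by (simp add: vsum_index)
  finally show "vsum m (\<lambda>q. f q - g q) k $ a = (vsum m f k - vsum m g k) $ a" using a cg by simp
qed

lemma mult_vsum:
  fixes L :: "real mat"
  assumes L: "L \<in> carrier_mat m r" and w: "\<And>q. q < k \<Longrightarrow> w q \<in> carrier_vec r"
  shows "L *\<^sub>v vsum r w k = vsum m (\<lambda>q. L *\<^sub>v w q) k"
  using w
proof (induction k)
  case 0 then show ?case using L by (simp add: mult_zero_vec)
next
  case (Suc k)
  have "vsum r w k \<in> carrier_vec r" using Suc.prems by (intro vsum_carrier) auto
  then have "L *\<^sub>v vsum r w (Suc k) = L *\<^sub>v vsum r w k + L *\<^sub>v w k"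
    using L Suc.prems by (simp add: mult_add_distrib_mat_vec)
  then show ?case using Suc by simp
qed

lemma source_alg:
  fixes Ajj Cjj Lm :: "real mat"
  assumes A: "Ajj \<in> carrier_mat m m" and C: "Cjj \<in> carrier_mat p m" and L: "Lm \<in> carrier_mat m p"
    and zh: "zh \<in> carrier_vec m" and zs: "zs \<in> carrier_vec m" and a: "a \<in> carrier_vec m" and b: "b \<in> carrier_vec p"
  shows "((Ajj - Lm * Cjj) *\<^sub>v zh + (a - Lm *\<^sub>v b) + Lm *\<^sub>v (b + Cjj *\<^sub>v zs)) - (a + Ajj *\<^sub>v zs)
          = (Ajj - Lm * Cjj) *\<^sub>v (zh - zs)"
proof -
  have LC: "Lm * Cjj \<in> carrier_mat m m" using L C by simp
  have e1: "(Ajj - Lm * Cjj) *\<^sub>v zh = Ajj *\<^sub>v zh - (Lm * Cjj) *\<^sub>v zh"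
    by (rule minus_mult_distrib_mat_vec[OF A LC zh])
  have e2: "Lm *\<^sub>v (b + Cjj *\<^sub>v zs) = Lm *\<^sub>v b + (Lm * Cjj) *\<^sub>v zs"
    using L C b zs by (simp add: mult_add_distrib_mat_vec[of _ m p] assoc_mult_mat_vec[of _ m p _ m])
  have e3: "(Ajj - Lm * Cjj) *\<^sub>v (zh - zs) = (Ajj *\<^sub>v zh - Ajj *\<^sub>v zs) - ((Lm * Cjj) *\<^sub>v zh - (Lm * Cjj) *\<^sub>v zs)"
    using A LC zh zs by (simp add: mult_minus_distrib_mat_vec[of _ m m] minus_mult_distrib_mat_vec[of _ m m])
  define p1 where "p1 = Ajj *\<^sub>v zh"
  define p2 where "p2 = (Lm * Cjj) *\<^sub>v zh"
  define p3 where "p3 = Lm *\<^sub>v b"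
  define p4 where "p4 = (Lm * Cjj) *\<^sub>v zs"
  define p5 where "p5 = Ajj *\<^sub>v zs"
  have c: "p1 \<in> carrier_vec m" "p2 \<in> carrier_vec m" "p3 \<in> carrier_vec m" "p4 \<in> carrier_vec m" "p5 \<in> carrier_vec m"
    using A LC L zh zs b by (auto simp: p1_def p2_def p3_def p4_def p5_def)
  have "(p1 - p2 + (a - p3) + (p3 + p4)) - (a + p5) = (p1 - p5) - (p2 - p4)"
    using c a by (intro eq_vecI) auto
  then show ?thesis unfolding e1 e2 e3 p1_def[symmetric] p2_def[symmetric] p3_def[symmetric]
      p4_def[symmetric] p5_def[symmetric] .
qed


primrec Kc :: "(nat \<Rightarrow> nat) \<Rightarrow> (nat \<Rightarrow> nat) \<Rightarrow> nat \<Rightarrow> nat \<Rightarrow> nat" where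
  "Kc t d N 0 = 0"
| "Kc t d N (Suc j) = t (Kc t d N j + d j + N)"

lemma vec_eq_of_diff: fixes a b :: "real vec"
  assumes "a \<in> carrier_vec m" "b \<in> carrier_vec m" "a - b = 0\<^sub>v m" shows "a = b"
proof (rule eq_vecI)
  fix i assume ib: "i < dim_vec b"
  have "(a - b) $ i = a $ i - b $ i" using ib by (rule index_minus_vec(1))
  moreover have "(a - b) $ i = 0" using assms ib by simp
  ultimately show "a $ i = b $ i" by simp
qed (use assms in simp)

theorem proposition1:
  fixes N n :: nat
    and A T Ti :: "real mat"
    and C :: "nat \<Rightarrow> real mat"
    and r d :: "nat \<Rightarrow> nat"
    and E :: "nat \<Rightarrow> (nat \<times> nat) set"
    and t :: "nat \<Rightarrow> nat"
  assumes A_dim: "A \<in> carrier_mat n n"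
    and C_dim: "\<forall>i < N. C i \<in> carrier_mat (r i) n"
    and obs: "observable_stacked N A C"
    and T_dim: "T \<in> carrier_mat n n" and Ti_dim: "Ti \<in> carrier_mat n n"
    and T_inv: "Ti * T = 1\<^sub>m n" "T * Ti = 1\<^sub>m n"
    and d_sum: "off d N = n"
    and lower_tri: "\<forall>j < N. \<forall>q < N. j < q \<longrightarrow> blk d (Ti * A * T) j q = 0\<^sub>m (d j) (d q)"
    and C_struct: "\<forall>i < N. \<forall>q < N. i < q \<longrightarrow> cblk d (C i * T) q = 0\<^sub>m (r i) (d q)"
    and blk_obs: "\<forall>j < N. observable (blk d (Ti * A * T) j j) (cblk d (C j * T) j)"
    and graph: "graph_conditions N E t"
  shows "\<exists>L. (\<forall>j < N. L j \<in> carrier_mat (d j) (r j)) \<and>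
           (\<exists>K. \<forall>x0 \<in> carrier_vec n. \<forall>zh tau.
              algorithm_run N d (Ti * A * T) (\<lambda>i. C i * T) L E
                 (\<lambda>j k. C j *\<^sub>v ((A ^\<^sub>m k) *\<^sub>v x0)) zh tau \<longrightarrow>
              (\<forall>k \<ge> K. \<forall>i < N. T *\<^sub>v stack d N (zh k i) = (A ^\<^sub>m k) *\<^sub>v x0))"
proof -
  define Ab where "Ab = Ti * A * T"
  have Ab: "Ab \<in> carrier_mat n n" using A_dim T_dim Ti_dim by (simp add: Ab_def)
  have CT: "C j * T \<in> carrier_mat (r j) n" if "j < N" for j using C_dim that T_dim by auto
  have tm: "strict_mono t" and conn: "\<And>q. union_strongly_connected N E (t q) (t (Suc q) - 1)"
    using graph by (auto simp: graph_conditions_def)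
  have "\<forall>j. \<exists>Lj. j < N \<longrightarrow> Lj \<in> carrier_mat (d j) (r j) \<and>
      (blk d Ab j j - Lj * cblk d (C j * T) j) ^\<^sub>m (d j) = 0\<^sub>m (d j) (d j)"
  proof
    fix j
    show "\<exists>Lj. j < N \<longrightarrow> Lj \<in> carrier_mat (d j) (r j) \<and>
      (blk d Ab j j - Lj * cblk d (C j * T) j) ^\<^sub>m (d j) = 0\<^sub>m (d j) (d j)"
    proof (cases "j < N")
      case True
      have c1: "cblk d (C j * T) j \<in> carrier_mat (r j) (d j)" using cblk_carrier[of d "C j * T" j] CT[OF True] by (metis carrier_matD(1))
      have "observable (blk d Ab j j) (cblk d (C j * T) j)" using blk_obs True by (simp add: Ab_def)
      from deadbeat[OF blk_carrier c1 this] show ?thesis by auto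
    qed auto
  qed
  then obtain L where L: "\<And>j. j < N \<Longrightarrow> L j \<in> carrier_mat (d j) (r j)"
    "\<And>j. j < N \<Longrightarrow> (blk d Ab j j - L j * cblk d (C j * T) j) ^\<^sub>m (d j) = 0\<^sub>m (d j) (d j)"
    by metis
  have main: "\<forall>k \<ge> Kc t d N N. \<forall>i < N. T *\<^sub>v stack d N (zh k i) = (A ^\<^sub>m k) *\<^sub>v x0"
    if x0: "x0 \<in> carrier_vec n" and run: "algorithm_run N d (Ti * A * T) (\<lambda>i. C i * T) L E
                 (\<lambda>j k. C j *\<^sub>v ((A ^\<^sub>m k) *\<^sub>v x0)) zh tau" for x0 zh tau
  proof -
    note run' = run[unfolded algorithm_run_def Ab_def[symmetric]]
    have R0: "\<And>i j. i < N \<Longrightarrow> j < N \<Longrightarrow> zh 0 i j \<in> carrier_vec (d j)" using run' by blast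
    have Rt0: "\<And>i j. i < N \<Longrightarrow> j < N \<Longrightarrow> tau 0 i j = (if i = j then Some 0 else None)" using run' by blast
    have Rsrc: "\<And>k j. j < N \<Longrightarrow> tau k j j = Some 0 \<and>
            zh (Suc k) j j =
            (blk d Ab j j - L j * cblk d (C j * T) j) *\<^sub>v zh k j j +
            vsum (d j) (\<lambda>q. (blk d Ab j q - L j * cblk d (C j * T) q) *\<^sub>v zh k j q) j +
            L j *\<^sub>v (C j *\<^sub>v ((A ^\<^sub>m k) *\<^sub>v x0))" using run' by blast
    have Rcl: "\<And>k j i. j < N \<Longrightarrow> i < N \<Longrightarrow> i \<noteq> j \<Longrightarrow>
       (let M = {l \<in> nbrs N E k i. tau k l j \<noteq> None};
            F = (case tau k i j of None \<Rightarrow> M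
                 | Some ti \<Rightarrow> {l \<in> M. the (tau k l j) < ti});
            own = vsum (d j) (\<lambda>q. blk d Ab j q *\<^sub>v zh k i q) j
        in if F \<noteq> {} then
             (\<exists>u \<in> F. (\<forall>l \<in> F. the (tau k u j) \<le> the (tau k l j)) \<and>
                tau (Suc k) i j = Some (the (tau k u j) + 1) \<and>
                zh (Suc k) i j = blk d Ab j j *\<^sub>v zh k u j + own)
           else
             tau (Suc k) i j = map_option Suc (tau k i j) \<and>
             zh (Suc k) i j = blk d Ab j j *\<^sub>v zh k i j + own)" using run' by blast

    define zt where "zt k = Ti *\<^sub>v ((A ^\<^sub>m k) *\<^sub>v x0)" for k
    define zs where "zs k j = vblk d (zt k) j" for k j
    define G where "G j = blk d Ab j j - L j * cblk d (C j * T) j" for j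
    have Akc: "(A ^\<^sub>m k) *\<^sub>v x0 \<in> carrier_vec n" for k by (rule mult_mat_vec_carrier[OF pow_carrier_mat[OF A_dim] x0])
    have ztc: "zt k \<in> carrier_vec n" for k unfolding zt_def by (rule mult_mat_vec_carrier[OF Ti_dim Akc])
    have TTi: "T *\<^sub>v zt k = (A ^\<^sub>m k) *\<^sub>v x0" for k
      unfolding zt_def using assoc_mult_mat_vec[OF T_dim Ti_dim Akc[of k], symmetric] T_inv(2) Akc[of k] by simp
    have F2: "zt (Suc k) = Ab *\<^sub>v zt k" for k
    proof -
      have "Ab *\<^sub>v zt k = (Ti * A) *\<^sub>v (T *\<^sub>v zt k)"
        unfolding Ab_def by (rule assoc_mult_mat_vec[OF mult_carrier_mat[OF Ti_dim A_dim] T_dim ztc])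
      also have "\<dots> = Ti *\<^sub>v (A *\<^sub>v ((A ^\<^sub>m k) *\<^sub>v x0))"
        unfolding TTi by (rule assoc_mult_mat_vec[OF Ti_dim A_dim Akc])
      also have "A *\<^sub>v ((A ^\<^sub>m k) *\<^sub>v x0) = (A ^\<^sub>m Suc k) *\<^sub>v x0"
        using assoc_mult_mat_vec[OF A_dim pow_carrier_mat[OF A_dim] x0, of k, symmetric] pow_commute[OF A_dim, of k] by simp
      finally show ?thesis unfolding zt_def by simp
    qed
    have zsc: "zs k j \<in> carrier_vec (d j)" for k j by (simp add: zs_def)
    have F4: "zs (Suc k) j = vsum (d j) (\<lambda>q. blk d Ab j q *\<^sub>v zs k q) j + blk d Ab j j *\<^sub>v zs k j"
      if j: "j < N" for k j
    proof -
      have "zs (Suc k) j = vsum (d j) (\<lambda>q. blk d Ab j q *\<^sub>v zs k q) N"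
        unfolding zs_def F2 by (rule vblk_mult[OF Ab ztc d_sum j])
      also have "\<dots> = vsum (d j) (\<lambda>q. blk d Ab j q *\<^sub>v zs k q) j + blk d Ab j j *\<^sub>v zs k j"
      proof (rule vsum_upto[OF _ _ j])
        show "blk d Ab j q *\<^sub>v zs k q \<in> carrier_vec (d j)" for q
          by (rule mult_mat_vec_carrier[OF blk_carrier[of d Ab j q] zsc[of k q]])
        show "blk d Ab j q *\<^sub>v zs k q = 0\<^sub>v (d j)" if "j < q" "q < N" for q
          using lower_tri that j zero_mat_mult_vec[OF zsc] by (simp add: Ab_def)
      qed
      finally show ?thesis .
    qed
    have F5: "C j *\<^sub>v ((A ^\<^sub>m k) *\<^sub>v x0) = vsum (r j) (\<lambda>q. cblk d (C j * T) q *\<^sub>v zs k q) j + cblk d (C j * T) j *\<^sub>v zs k j"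
      if j: "j < N" for k j
    proof -
      have "C j *\<^sub>v ((A ^\<^sub>m k) *\<^sub>v x0) = (C j * T) *\<^sub>v zt k"
        unfolding TTi[symmetric] using C_dim j by (intro assoc_mult_mat_vec[OF _ T_dim ztc, symmetric]) auto
      also have "\<dots> = vsum (r j) (\<lambda>q. cblk d (C j * T) q *\<^sub>v zs k q) N"
        unfolding zs_def by (rule cmult_blocks[OF CT[OF j] ztc d_sum])
      also have "\<dots> = vsum (r j) (\<lambda>q. cblk d (C j * T) q *\<^sub>v zs k q) j + cblk d (C j * T) j *\<^sub>v zs k j"
      proof (rule vsum_upto[OF _ _ j])
        show "cblk d (C j * T) q *\<^sub>v zs k q \<in> carrier_vec (r j)" for q
        proof -
          have "dim_row (C j * T) = r j" using CT[OF j] by (rule carrier_matD(1))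
          then show ?thesis using mult_mat_vec_carrier[OF cblk_carrier[of d "C j * T" q] zsc[of k q]] by simp
        qed
        show "cblk d (C j * T) q *\<^sub>v zs k q = 0\<^sub>v (r j)" if "j < q" "q < N" for q
          using C_struct that j zero_mat_mult_vec[OF zsc] by simp
      qed
      finally show ?thesis .
    qed
    have vsc: "vsum (d j) (\<lambda>q. blk d Ab j q *\<^sub>v v q) k \<in> carrier_vec (d j)" for j v k
    proof (rule vsum_carrier, rule carrier_vecI)
      fix i
      have "dim_row (blk d Ab j i) = d j" by (rule carrier_matD(1)[OF blk_carrier])
      then show "dim_vec (blk d Ab j i *\<^sub>v v i) = d j" by simp
    qed
    have zhc: "zh k i j \<in> carrier_vec (d j)" if i: "i < N" and j: "j < N" for k i j
    proof (cases k)
      case 0 then show ?thesis using R0 i j by simp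
    next
      case (Suc k')
      show ?thesis
      proof (cases "i = j")
        case True
        have e: "zh (Suc k') j j =
            (blk d Ab j j - L j * cblk d (C j * T) j) *\<^sub>v zh k' j j +
            vsum (d j) (\<lambda>q. (blk d Ab j q - L j * cblk d (C j * T) q) *\<^sub>v zh k' j q) j +
            L j *\<^sub>v (C j *\<^sub>v ((A ^\<^sub>m k') *\<^sub>v x0))" using Rsrc[OF j, of k'] by (rule conjunct2)
        have "dim_vec (zh (Suc k') j j) = dim_vec (L j *\<^sub>v (C j *\<^sub>v ((A ^\<^sub>m k') *\<^sub>v x0)))"
          unfolding e by (rule index_add_vec(2))
        also have "\<dots> = d j" using carrier_matD(1)[OF L(1)[OF j]] by (simp only: dim_mult_mat_vec)
        finally show ?thesis using Suc True by (intro carrier_vecI) simp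
      next
        case False
        from step_shape[where tau=tau and zh=zh and d=d and Ab=Ab and N=N and E=E and k=k' and i=i and j=j, OF Rcl[of j i k', OF j i False]]
        obtain w where "zh (Suc k') i j = blk d Ab j j *\<^sub>v w + vsum (d j) (\<lambda>q. blk d Ab j q *\<^sub>v zh k' i q) j" ..
        then have "dim_vec (zh (Suc k') i j) = dim_vec (vsum (d j) (\<lambda>q. blk d Ab j q *\<^sub>v zh k' i q) j)"
          by (simp only: index_add_vec(2))
        also have "\<dots> = d j" using vsc[of j "zh k' i" j] by (rule carrier_vecD)
        finally show ?thesis using Suc by (intro carrier_vecI) simp
      qed
    qed
    have Gc: "G j \<in> carrier_mat (d j) (d j)" if j: "j < N" for j
    proof -
      have c: "cblk d (C j * T) j \<in> carrier_mat (r j) (d j)"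
        using cblk_carrier[of d "C j * T" j] carrier_matD(1)[OF CT[OF j]] by simp
      have "L j * cblk d (C j * T) j \<in> carrier_mat (d j) (d j)" by (rule mult_carrier_mat[OF L(1)[OF j] c])
      then show ?thesis unfolding G_def by (rule minus_carrier_mat)
    qed
    have E1: "zh (Suc k) j j - zs (Suc k) j = G j *\<^sub>v (zh k j j - zs k j)"
      if j: "j < N" and low: "\<forall>q<j. zh k j q = zs k q" for k j
    proof -
      define Aq where "Aq q = blk d Ab j q" for q
      define Cq where "Cq q = cblk d (C j * T) q" for q
      have Aqc: "Aq q \<in> carrier_mat (d j) (d q)" for q by (simp add: Aq_def)
      have Cqc: "Cq q \<in> carrier_mat (r j) (d q)" for q
        using cblk_carrier[of d "C j * T" q] carrier_matD(1)[OF CT[OF j]] by (simp add: Cq_def)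
      have Lj: "L j \<in> carrier_mat (d j) (r j)" using L(1)[OF j] .
      define a where "a = vsum (d j) (\<lambda>q. Aq q *\<^sub>v zs k q) j"
      define b where "b = vsum (r j) (\<lambda>q. Cq q *\<^sub>v zs k q) j"
      have ac: "a \<in> carrier_vec (d j)" unfolding a_def by (rule vsum_carrier, rule mult_mat_vec_carrier[OF Aqc zsc])
      have bc: "b \<in> carrier_vec (r j)" unfolding b_def by (rule vsum_carrier, rule mult_mat_vec_carrier[OF Cqc zsc])
      have "vsum (d j) (\<lambda>q. (Aq q - L j * Cq q) *\<^sub>v zh k j q) j
          = vsum (d j) (\<lambda>q. Aq q *\<^sub>v zs k q - (L j * Cq q) *\<^sub>v zs k q) j"
      proof (rule vsum_cong)
        fix q assume "q < j"
        then have "zh k j q = zs k q" using low by simp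
        then show "(Aq q - L j * Cq q) *\<^sub>v zh k j q = Aq q *\<^sub>v zs k q - (L j * Cq q) *\<^sub>v zs k q"
          using minus_mult_distrib_mat_vec[OF Aqc mult_carrier_mat[OF Lj Cqc] zsc] by simp
      qed
      also have "\<dots> = a - vsum (d j) (\<lambda>q. (L j * Cq q) *\<^sub>v zs k q) j"
        unfolding a_def by (rule vsum_diff, rule mult_mat_vec_carrier[OF Aqc zsc], rule mult_mat_vec_carrier[OF mult_carrier_mat[OF Lj Cqc] zsc])
      also have "vsum (d j) (\<lambda>q. (L j * Cq q) *\<^sub>v zs k q) j = vsum (d j) (\<lambda>q. L j *\<^sub>v (Cq q *\<^sub>v zs k q)) j"
        by (rule vsum_cong, rule assoc_mult_mat_vec[OF Lj Cqc zsc])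
      also have "\<dots> = L j *\<^sub>v b"
        unfolding b_def by (rule mult_vsum[symmetric, OF Lj], rule mult_mat_vec_carrier[OF Cqc zsc])
      finally have vs: "vsum (d j) (\<lambda>q. (Aq q - L j * Cq q) *\<^sub>v zh k j q) j = a - L j *\<^sub>v b" .
      have "zh (Suc k) j j = G j *\<^sub>v zh k j j + (a - L j *\<^sub>v b) + L j *\<^sub>v (b + Cq j *\<^sub>v zs k j)"
        using Rsrc[OF j, of k] vs F5[OF j, of k] unfolding G_def Aq_def Cq_def b_def by simp
      moreover have "zs (Suc k) j = a + Aq j *\<^sub>v zs k j" using F4[OF j, of k] unfolding a_def Aq_def by simp
      ultimately show ?thesis unfolding G_def Aq_def[symmetric] Cq_def[symmetric]
        using source_alg[OF Aqc Cqc Lj zhc[OF j j] zsc ac bc] by simp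
    qed
    have SE: "\<forall>k \<ge> K0 + d j. zh k j j = zs k j"
      if j: "j < N" and low: "\<forall>k \<ge> K0. \<forall>q<j. zh k j q = zs k q" for K0 j
    proof -
      define e where "e k = zh k j j - zs k j" for k
      have ec: "e k \<in> carrier_vec (d j)" for k unfolding e_def using zhc[OF j j] zsc by simp
      have un: "e (K0 + s) = (G j ^\<^sub>m s) *\<^sub>v e K0" for s
      proof (induction s)
        case 0 then show ?case using ec Gc[OF j] by simp
      next
        case (Suc s)
        have lw: "\<forall>q<j. zh (K0 + s) j q = zs (K0 + s) q" using low by simp
        have "e (Suc (K0 + s)) = G j *\<^sub>v e (K0 + s)" unfolding e_def by (rule E1[OF j lw])
        then have "e (K0 + Suc s) = G j *\<^sub>v e (K0 + s)" by simp
        also have "\<dots> = (G j * G j ^\<^sub>m s) *\<^sub>v e K0" unfolding Suc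
          by (rule assoc_mult_mat_vec[OF Gc[OF j] pow_carrier_mat[OF Gc[OF j]] ec, symmetric])
        also have "G j * G j ^\<^sub>m s = G j ^\<^sub>m Suc s" using pow_commute[OF Gc[OF j]] by simp
        finally show ?case .
      qed
      have z0: "e (K0 + d j + s) = 0\<^sub>v (d j)" for s
      proof (induction s)
        case 0
        have "e (K0 + d j) = (G j ^\<^sub>m d j) *\<^sub>v e K0" by (rule un)
        also have "G j ^\<^sub>m d j = 0\<^sub>m (d j) (d j)" using L(2)[OF j] unfolding G_def .
        also have "0\<^sub>m (d j) (d j) *\<^sub>v e K0 = 0\<^sub>v (d j)" by (rule zero_mat_mult_vec[OF ec])
        finally show ?case by simp
      next
        case (Suc s)
        have lw: "\<forall>q<j. zh (K0 + d j + s) j q = zs (K0 + d j + s) q" using low by simp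
        have "e (Suc (K0 + d j + s)) = G j *\<^sub>v e (K0 + d j + s)" unfolding e_def by (rule E1[OF j lw])
        also have "\<dots> = 0\<^sub>v (d j)" unfolding Suc by (rule mult_zero_vec[OF Gc[OF j]])
        finally show ?case by simp
      qed
      show ?thesis
      proof (intro allI impI)
        fix k assume "K0 + d j \<le> k"
        then obtain s where ks: "k = K0 + d j + s" using le_Suc_ex by blast
        have "zh k j j - zs k j = 0\<^sub>v (d j)" using z0[of s] unfolding ks e_def .
        then show "zh k j j = zs k j" by (rule vec_eq_of_diff[OF zhc[OF j j] zsc])
      qed
    qed
    have ind: "\<forall>k \<ge> Kc t d N j. \<forall>i < N. \<forall>q < j. zh k i q = zs k q" if "j \<le> N" for j
      using that
    proof (induction j)
      case 0 then show ?case by simp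
    next
      case (Suc j)
      then have j: "j < N" by simp
      have IH: "\<forall>k \<ge> Kc t d N j. \<forall>i < N. \<forall>q < j. zh k i q = zs k q" using Suc by simp
      define S where "S = Kc t d N j + d j"
      have srcx: "\<forall>k \<ge> S. zh k j j = zs k j"
        unfolding S_def by (rule SE[OF j]) (use IH j in auto)
      have inv: "\<forall>i s. i < N \<longrightarrow> tau k i j = Some s \<longrightarrow> s + S \<le> k \<longrightarrow> zh k i j = zs k j" for k
      proof (induction k)
        case 0
        show ?case
        proof (intro allI impI)
          fix i s assume i: "i < N" and ts: "tau 0 i j = Some s" and sS: "s + S \<le> 0"
          have "i = j" using Rt0[OF i j] ts by (auto split: if_splits)
          then show "zh 0 i j = zs 0 j" using srcx sS by simp
        qed
      next
        case (Suc k)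
        show ?case
        proof (intro allI impI)
          fix i s assume i: "i < N" and ts: "tau (Suc k) i j = Some s" and sS: "s + S \<le> Suc k"
          show "zh (Suc k) i j = zs (Suc k) j"
          proof (cases "i = j")
            case True
            have "s = 0" using Rsrc[OF j, of "Suc k"] ts True by simp
            then show ?thesis using srcx sS True by simp
          next
            case False
            have s1: "s \<noteq> 0"
              using step_src[where tau=tau and zh=zh and d=d and Ab=Ab and N=N and E=E and k=k and i=i and j=j, OF Rcl[of j i k, OF j i False] ts]
              by (elim disjE bexE exE conjE) simp_all
            have kS: "Kc t d N j \<le> k" using sS S_def s1 by simp
            have lowi: "\<forall>q<j. zh k i q = zs k q" by (intro allI impI) (rule IH[rule_format, OF kS i])
            have own: "vsum (d j) (\<lambda>q. blk d Ab j q *\<^sub>v zh k i q) j = vsum (d j) (\<lambda>q. blk d Ab j q *\<^sub>v zs k q) j"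
              by (rule vsum_cong) (use lowi in simp)
            have fin: "blk d Ab j j *\<^sub>v zs k j + vsum (d j) (\<lambda>q. blk d Ab j q *\<^sub>v zs k q) j = zs (Suc k) j"
              unfolding F4[OF j] by (rule comm_add_vec[OF mult_mat_vec_carrier[OF blk_carrier[of d Ab j j] zsc[of k j]] vsc[of j "zs k" j]])
            from step_src[where tau=tau and zh=zh and d=d and Ab=Ab and N=N and E=E and k=k and i=i and j=j, OF Rcl[of j i k, OF j i False] ts] show ?thesis
            proof
              assume "\<exists>u \<in> nbrs N E k i. \<exists>su. tau k u j = Some su \<and> s = su + 1 \<and>
                zh (Suc k) i j = blk d Ab j j *\<^sub>v zh k u j + vsum (d j) (\<lambda>q. blk d Ab j q *\<^sub>v zh k i q) j"
              then obtain u su where u: "u \<in> nbrs N E k i" "tau k u j = Some su" "s = su + 1"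
                "zh (Suc k) i j = blk d Ab j j *\<^sub>v zh k u j + vsum (d j) (\<lambda>q. blk d Ab j q *\<^sub>v zh k i q) j" by blast
              have "u < N" using u(1) by (simp add: nbrs_def)
              moreover have "su + S \<le> k" using u(3) sS by simp
              ultimately have "zh k u j = zs k j" using Suc.IH u(2) by blast
              then show ?thesis using u(4) own fin by simp
            next
              assume "\<exists>si. tau k i j = Some si \<and> s = si + 1 \<and>
                zh (Suc k) i j = blk d Ab j j *\<^sub>v zh k i j + vsum (d j) (\<lambda>q. blk d Ab j q *\<^sub>v zh k i q) j"
              then obtain si where u: "tau k i j = Some si" "s = si + 1"
                "zh (Suc k) i j = blk d Ab j j *\<^sub>v zh k i j + vsum (d j) (\<lambda>q. blk d Ab j q *\<^sub>v zh k i q) j" by blast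
              have "si + S \<le> k" using u(2) sS by simp
              then have "zh k i j = zs k j" using Suc.IH u(1) i by blast
              then show ?thesis using u(3) own fin by simp
            qed
          qed
        qed
      qed
      define good where "good k i = (\<exists>s. tau k i j = Some s \<and> s + S \<le> k)" for k i
      have allgood: "\<forall>k \<ge> t (S + N). \<forall>i < N. good k i"
      proof (rule spread[OF _ _ _ j tm conn])
        fix k i assume i: "i < N" and g: "good k i"
        then obtain s where s: "tau k i j = Some s" "s + S \<le> k" by (auto simp: good_def)
        show "good (Suc k) i"
        proof (cases "i = j")
          case True
          then show ?thesis using Rsrc[OF j, of "Suc k"] Rsrc[OF j, of k] s by (auto simp: good_def)
        next
          case False
          from step_own[where tau=tau and zh=zh and d=d and Ab=Ab and N=N and E=E and k=k and i=i and j=j, OF Rcl[of j i k, OF j i False] s(1)] obtain s' where "tau (Suc k) i j = Some s'" "s' \<le> s + 1" by blast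
          then show ?thesis using s by (auto simp: good_def)
        qed
      next
        fix k i l assume i: "i < N" and l: "l < N" and ij: "i \<noteq> j" and nb: "l \<in> nbrs N E k i" and g: "good k l"
        then obtain sl where s: "tau k l j = Some sl" "sl + S \<le> k" by (auto simp: good_def)
        from step_nb[where tau=tau and zh=zh and d=d and Ab=Ab and N=N and E=E and k=k and i=i and j=j, OF Rcl[of j i k, OF j i ij] nb s(1)] obtain s' where "tau (Suc k) i j = Some s'" "s' \<le> sl + 1" by blast
        then show "good (Suc k) i" using s by (auto simp: good_def)
      next
        fix k assume "S \<le> k"
        then show "good k j" using Rsrc[OF j, of k] by (auto simp: good_def)
      qed
      show ?case
      proof (intro allI impI)
        fix k i q assume k: "Kc t d N (Suc j) \<le> k" and i: "i < N" and q: "q < Suc j"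
        have kt: "t (S + N) \<le> k" using k by (simp add: S_def)
        show "zh k i q = zs k q"
        proof (cases "q = j")
          case True
          from allgood kt i obtain s where "tau k i j = Some s" "s + S \<le> k" by (auto simp: good_def)
          then show ?thesis using inv i True by blast
        next
          case False
          have "Kc t d N j \<le> k" using seq_suble[OF tm, of "S + N"] kt by (simp add: S_def)
          then show ?thesis using IH i q False by auto
        qed
      qed
    qed
    show ?thesis
    proof (intro allI impI)
      fix k i assume k: "Kc t d N N \<le> k" and i: "i < N"
      have "stack d N (zh k i) = zt k"
        by (rule stack_vblk) (use ztc d_sum ind[of N] k i in \<open>auto simp: zs_def\<close>)
      then show "T *\<^sub>v stack d N (zh k i) = (A ^\<^sub>m k) *\<^sub>v x0" using TTi by simp
    qed
  qed
  show ?thesis using L(1) main by blast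
qed


end
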